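(* For every $n\in\mathbb N$, $\left(\mathcal T_{(n)}\right)^d\simeq C(S^1)^{(n)}$, i.e. there is a unital complete order isomorphism between the operator system dual of $\mathcal T_{(n)}$ and the operator system of $n\times n$ Toeplitz matrices.
   Context: $C(S^1)_{(n)}$ is the space of continuous functions $f$ on the unit circle with Fourier coefficients $\hat f(k)=0$ for $|k|\ge n$. $T_f$ is the Toeplitz operator on the Hardy space $H^2(S^1)$ with symbol $f$ (compression to $H^2(S^1)$ of multiplication by $f$ on $L^2(S^1)$), and $\mathcal T_{(n)}=\{T_f:f\in C(S^1)_{(n)}\}$, an operator subsystem of $B(H^2(S^1))$. $C(S^1)^{(n)}$ is the operator subsystem of $M_n(\mathbb C)$ of Toeplitz matrices $[\tau_{k-\ell}]$ with unit the identity. For a finite-dimensional operator system $\mathcal R$, its dual $\mathcal R^d$ has matrix ordering: $[\varphi_{ij}]$ positive iff $r\mapsto[\varphi_{ij}(r)]$ is completely positive $\mathcal R\to M_p(\mathbb C)$; $(\mathcal T_{(n)})^d$ is given as order unit the faithful state $T_f\mapsto\hat f(0)$. *)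

theory Defs
  imports "HOL-Analysis.Analysis"
begin

text \<open>Functions on the unit circle are represented as complex functions, of which only the
values on the unit circle (sphere 0 1) matter.\<close>

definition fourier_coeff :: "(complex \<Rightarrow> complex) \<Rightarrow> int \<Rightarrow> complex" where
  "fourier_coeff f k =
     complex_of_real (1 / (2 * pi)) *
       integral {0..2 * pi} (\<lambda>t. f (cis t) * cis (- (of_int k * t)))"

definition trig_space :: "nat \<Rightarrow> (complex \<Rightarrow> complex) set" where
  "trig_space n = {f. continuous_on (sphere 0 1) f \<and>
                      (\<forall>k::int. \<bar>k\<bar> \<ge> int n \<longrightarrow> fourier_coeff f k = 0)}"

text \<open>H^2(S^1) is identified with l^2(N) via the orthonormal basis e_j(z) = z^j, j \<ge> 0.
In this basis the Toeplitz operator T_f (compression of multiplication by f) has matrix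
entries <T_f e_j, e_i> = fhat(i - j).\<close>

type_synonym hvec = "nat \<Rightarrow> complex"
type_synonym hop = "hvec \<Rightarrow> hvec"

definition in_l2 :: "hvec \<Rightarrow> bool" where
  "in_l2 x \<longleftrightarrow> (\<lambda>k. (cmod (x k))\<^sup>2) summable_on UNIV"

definition l2_inner :: "hvec \<Rightarrow> hvec \<Rightarrow> complex" where
  "l2_inner y x = infsum (\<lambda>k. y k * cnj (x k)) UNIV"

definition toeplitz_op :: "(complex \<Rightarrow> complex) \<Rightarrow> hop" where
  "toeplitz_op f x = (\<lambda>i. infsum (\<lambda>j. fourier_coeff f (int i - int j) * x j) UNIV)"

definition toeplitz_system :: "nat \<Rightarrow> hop set" where
  "toeplitz_system n = toeplitz_op ` trig_space n"

definition cnonneg :: "complex \<Rightarrow> bool" where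
  "cnonneg z \<longleftrightarrow> Im z = 0 \<and> Re z \<ge> 0"

definition opmat_pos :: "nat \<Rightarrow> (nat \<Rightarrow> nat \<Rightarrow> hop) \<Rightarrow> bool" where
  "opmat_pos m R \<longleftrightarrow>
     (\<forall>x :: nat \<Rightarrow> hvec. (\<forall>a<m. in_l2 (x a)) \<longrightarrow>
        cnonneg (\<Sum>a<m. \<Sum>b<m. l2_inner (R a b (x b)) (x a)))"

text \<open>Positivity of an element of M_m(M_p(C)) = M_{mp}(C), given as an m x m array of
p x p complex matrices (matrices as functions nat => nat => complex, indices < p used).\<close>
definition blockmat_pos :: "nat \<Rightarrow> nat \<Rightarrow> (nat \<Rightarrow> nat \<Rightarrow> nat \<Rightarrow> nat \<Rightarrow> complex) \<Rightarrow> bool" where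
  "blockmat_pos m p B \<longleftrightarrow>
     (\<forall>v :: nat \<Rightarrow> nat \<Rightarrow> complex.
        cnonneg (\<Sum>a<m. \<Sum>b<m. \<Sum>i<p. \<Sum>j<p. cnj (v a i) * B a b i j * v b j))"

type_synonym functional = "hop \<Rightarrow> complex"

definition op_add :: "hop \<Rightarrow> hop \<Rightarrow> hop" where
  "op_add T S = (\<lambda>x k. T x k + S x k)"

definition op_scale :: "complex \<Rightarrow> hop \<Rightarrow> hop" where
  "op_scale c T = (\<lambda>x k. c * T x k)"

text \<open>Linear functionals on T_(n); normalised to be 0 outside T_(n).\<close>
definition dual_space :: "nat \<Rightarrow> functional set" where
  "dual_space n = {\<phi>.
     (\<forall>T\<in>toeplitz_system n. \<forall>S\<in>toeplitz_system n. \<phi> (op_add T S) = \<phi> T + \<phi> S) \<and>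
     (\<forall>c. \<forall>T\<in>toeplitz_system n. \<phi> (op_scale c T) = c * \<phi> T) \<and>
     (\<forall>T. T \<notin> toeplitz_system n \<longrightarrow> \<phi> T = 0)}"

text \<open>[phi_ij] (p x p) is positive in M_p(dual) iff r |-> [phi_ij(r)] is completely positive
from T_(n) to M_p(C).\<close>
definition dual_mat_pos :: "nat \<Rightarrow> nat \<Rightarrow> (nat \<Rightarrow> nat \<Rightarrow> functional) \<Rightarrow> bool" where
  "dual_mat_pos n p \<Phi> \<longleftrightarrow>
     (\<forall>m. \<forall>R :: nat \<Rightarrow> nat \<Rightarrow> hop.
        (\<forall>a<m. \<forall>b<m. R a b \<in> toeplitz_system n) \<and> opmat_pos m R \<longrightarrow>
        blockmat_pos m p (\<lambda>a b i j. \<Phi> i j (R a b)))"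

type_synonym cmat = "nat \<Rightarrow> nat \<Rightarrow> complex"

definition toeplitz_mats :: "nat \<Rightarrow> cmat set" where
  "toeplitz_mats n = {A. \<exists>\<tau> :: int \<Rightarrow> complex.
      \<forall>k l. A k l = (if k < n \<and> l < n then \<tau> (int k - int l) else 0)}"

definition id_mat :: "nat \<Rightarrow> cmat" where
  "id_mat n = (\<lambda>k l. if k < n \<and> l < n \<and> k = l then 1 else 0)"

definition ucoi :: "nat \<Rightarrow> (functional \<Rightarrow> cmat) \<Rightarrow> bool" where
  "ucoi n \<Psi> \<longleftrightarrow>
     bij_betw \<Psi> (dual_space n) (toeplitz_mats n) \<and>
     (\<forall>\<phi>\<in>dual_space n. \<forall>\<psi>\<in>dual_space n.
        \<Psi> (\<lambda>T. \<phi> T + \<psi> T) = (\<lambda>k l. \<Psi> \<phi> k l + \<Psi> \<psi> k l)) \<and>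
     (\<forall>c. \<forall>\<phi>\<in>dual_space n. \<Psi> (\<lambda>T. c * \<phi> T) = (\<lambda>k l. c * \<Psi> \<phi> k l)) \<and>
     (\<forall>\<phi>\<in>dual_space n.
        (\<forall>f\<in>trig_space n. \<phi> (toeplitz_op f) = fourier_coeff f 0) \<longrightarrow> \<Psi> \<phi> = id_mat n) \<and>
     (\<forall>p. \<forall>\<Phi> :: nat \<Rightarrow> nat \<Rightarrow> functional.
        (\<forall>i<p. \<forall>j<p. \<Phi> i j \<in> dual_space n) \<longrightarrow>
        (dual_mat_pos n p \<Phi> \<longleftrightarrow> blockmat_pos p n (\<lambda>i j. \<Psi> (\<Phi> i j))))"

end

theory Submission
  imports Defs "HOL-Library.Complex_Order"
begin


definition sesq :: "'a set \<Rightarrow> ('a \<Rightarrow> 'a \<Rightarrow> complex) \<Rightarrow> ('a \<Rightarrow> complex) \<Rightarrow> ('a \<Rightarrow> complex) \<Rightarrow> complex" where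
  "sesq S K u v = (\<Sum>x\<in>S. \<Sum>y\<in>S. cnj (u x) * K x y * v y)"

definition psd :: "'a set \<Rightarrow> ('a \<Rightarrow> 'a \<Rightarrow> complex) \<Rightarrow> bool" where
  "psd S K \<longleftrightarrow> (\<forall>v. 0 \<le> sesq S K v v)"

lemma cnonneg_iff: "cnonneg z \<longleftrightarrow> 0 \<le> z"
  by (auto simp: cnonneg_def less_eq_complex_def)

lemma sesq_cong: "(\<And>x y. x \<in> S \<Longrightarrow> y \<in> S \<Longrightarrow> K x y = K' x y) \<Longrightarrow> sesq S K u v = sesq S K' u v"
  unfolding sesq_def by (intro sum.cong refl) auto

lemma sesq_cong_vec: "(\<And>x. x \<in> S \<Longrightarrow> u x = u' x) \<Longrightarrow> (\<And>x. x \<in> S \<Longrightarrow> v x = v' x) \<Longrightarrow> sesq S K u v = sesq S K u' v'"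
  unfolding sesq_def by (intro sum.cong refl) auto

lemma psd_cong: "(\<And>x y. x \<in> S \<Longrightarrow> y \<in> S \<Longrightarrow> K x y = K' x y) \<Longrightarrow> psd S K \<longleftrightarrow> psd S K'"
  unfolding psd_def using sesq_cong by metis

lemma psd_subset:
  assumes "finite S" "T \<subseteq> S" "psd S K"
  shows "psd T K"
  unfolding psd_def
proof
  fix v
  let ?w = "\<lambda>x. if x \<in> T then v x else (0::complex)"
  have "sesq S K ?w ?w = (\<Sum>x\<in>S. if x\<in>T then (\<Sum>y\<in>S. if y\<in>T then cnj (v x) * K x y * v y else 0) else 0)"
    unfolding sesq_def by (intro sum.cong) (auto intro!: sum.cong)
  also have "\<dots> = (\<Sum>x\<in>S\<inter>T. (\<Sum>y\<in>S\<inter>T. cnj (v x) * K x y * v y))"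
    using assms(1) by (simp add: sum.inter_restrict)
  also have "S \<inter> T = T" using assms(2) by blast
  finally have "sesq S K ?w ?w = sesq T K v v" unfolding sesq_def by simp
  then show "0 \<le> sesq T K v v" using assms(3) unfolding psd_def by metis
qed

lemma sesq_two:
  assumes "x \<noteq> y"
  shows "sesq {x,y} K v v = cnj (v x) * K x x * v x + cnj (v x) * K x y * v y
     + cnj (v y) * K y x * v x + cnj (v y) * K y y * v y"
  using assms unfolding sesq_def by simp

lemma psd_diag:
  assumes "finite S" "psd S K" "x \<in> S"
  shows "0 \<le> K x x"
proof -
  have "psd {x} K" using psd_subset assms by blast
  then have "0 \<le> sesq {x} K (\<lambda>_. 1) (\<lambda>_. 1)" unfolding psd_def by blast
  then show ?thesis unfolding sesq_def by simp
qed

lemma psd_herm: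
  assumes "finite S" "psd S K" "x \<in> S" "y \<in> S"
  shows "K y x = cnj (K x y)"
proof (cases "x = y")
  case True
  then show ?thesis using psd_diag[OF assms(1,2,3)]
    by (auto simp: less_eq_complex_def complex_eq_iff)
next
  case False
  have P: "psd {x,y} K" using psd_subset assms by (metis empty_subsetI insert_subset)
  have "0 \<le> sesq {x,y} K (\<lambda>_. 1) (\<lambda>_. 1)" using P unfolding psd_def by blast
  then have 1: "Im (K x x + K x y + K y x + K y y) = 0" using False
    by (simp add: sesq_two less_eq_complex_def)
  let ?v = "\<lambda>z. if z = x then 1 else \<i>"
  have "0 \<le> sesq {x,y} K ?v ?v" using P unfolding psd_def by blast
  then have 2: "Im (K x x + K x y * \<i> - \<i> * K y x + K y y) = 0" using False
    by (simp add: sesq_two less_eq_complex_def)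
  have 3: "Im (K x x) = 0" "Im (K y y) = 0"
    using psd_diag[OF assms(1,2,3)] psd_diag[OF assms(1,2,4)] by (auto simp: less_eq_complex_def)
  show ?thesis using 1 2 3 by (simp add: complex_eq_iff)
qed


lemma psd_zero_row:
  assumes "finite S" "psd S K" "c \<in> S" "y \<in> S" "K c c = 0"
  shows "K c y = 0"
proof (rule ccontr)
  assume ne: "K c y \<noteq> 0"
  then have "y \<noteq> c" using assms by auto
  have P: "psd {c,y} K" using psd_subset assms by (metis empty_subsetI insert_subset)
  have H: "K y c = cnj (K c y)" using psd_herm[OF assms(1,2,3,4)] .
  define a where "a = K c y"
  define t where "t = (Re (K y y) + 1) / (cmod a)\<^sup>2"
  define v where "v = (\<lambda>z. if z = c then - (complex_of_real t * a) else 1)"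
  have "0 \<le> sesq {c,y} K v v" using P unfolding psd_def by blast
  also have "sesq {c,y} K v v = cnj (v c) * K c c * v c + cnj (v c) * K c y * v y
     + cnj (v y) * K y c * v c + cnj (v y) * K y y * v y"
    using sesq_two[of c y K v] \<open>y \<noteq> c\<close> by auto
  also have "\<dots> = K y y - 2 * complex_of_real t * (cnj a * a)"
    using \<open>y \<noteq> c\<close> assms(5) H unfolding v_def a_def by (simp add: algebra_simps)
  also have "\<dots> = K y y - 2 * complex_of_real (t * (cmod a)\<^sup>2)"
  proof -
    have "cnj a * a = complex_of_real ((cmod a)\<^sup>2)"
      by (metis complex_norm_square of_real_power mult.commute)
    then show ?thesis by simp
  qed
  also have "t * (cmod a)\<^sup>2 = Re (K y y) + 1"
    using ne by (simp add: t_def a_def)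
  finally have "0 \<le> Re (K y y) - 2 * (Re (K y y) + 1)"
    by (simp add: less_eq_complex_def)
  moreover have "0 \<le> Re (K y y)" using psd_diag[OF assms(1,2,4)] by (simp add: less_eq_complex_def)
  ultimately show False by simp
qed

lemma sesq_diff_left: "sesq S K (\<lambda>x. u x - u' x) v = sesq S K u v - sesq S K u' v"
  unfolding sesq_def by (simp add: algebra_simps sum_subtractf)

lemma sesq_diff_right: "sesq S K u (\<lambda>x. v x - v' x) = sesq S K u v - sesq S K u v'"
  unfolding sesq_def by (simp add: algebra_simps sum_subtractf)

lemma sesq_delta_left:
  assumes "finite S" "c \<in> S"
  shows "sesq S K (\<lambda>x. if x = c then s else 0) v = cnj s * (\<Sum>y\<in>S. K c y * v y)"
proof -
  have "sesq S K (\<lambda>x. if x = c then s else 0) v = (\<Sum>x\<in>S. if x = c then (\<Sum>y\<in>S. cnj s * K c y * v y) else 0)"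
    unfolding sesq_def by (intro sum.cong) auto
  also have "\<dots> = (\<Sum>y\<in>S. cnj s * K c y * v y)" using assms by simp
  finally show ?thesis by (simp add: sum_distrib_left mult.assoc)
qed

lemma sesq_delta_right:
  assumes "finite S" "c \<in> S"
  shows "sesq S K u (\<lambda>x. if x = c then s else 0) = (\<Sum>x\<in>S. cnj (u x) * K x c) * s"
proof -
  have "sesq S K u (\<lambda>x. if x = c then s else 0) = (\<Sum>x\<in>S. cnj (u x) * K x c * s)"
    unfolding sesq_def using assms by (intro sum.cong) (auto simp: if_distrib cong: if_cong)
  then show ?thesis by (simp add: sum_distrib_right)
qed

lemma psd_schur:
  assumes "finite S" "psd S K" "c \<in> S" "K c c = complex_of_real r" "r > 0"
  shows "psd S (\<lambda>x y. K x y - K x c * K c y / complex_of_real r)"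
  unfolding psd_def
proof
  fix v
  define s where "s = (\<Sum>y\<in>S. K c y * v y) / complex_of_real r"
  define d where "d = (\<lambda>x. if x = c then s else 0)"
  define w where "w = (\<lambda>x. v x - d x)"
  have rs: "(\<Sum>y\<in>S. K c y * v y) = complex_of_real r * s" using assms(5) by (simp add: s_def)
  have ls: "(\<Sum>x\<in>S. cnj (v x) * K x c) = complex_of_real r * cnj s"
  proof -
    have "(\<Sum>x\<in>S. cnj (v x) * K x c) = (\<Sum>x\<in>S. cnj (K c x * v x))"
      using psd_herm[OF assms(1,2,3)] by (intro sum.cong) auto
    also have "\<dots> = cnj (complex_of_real r * s)" using rs by (metis cnj_sum)
    finally show ?thesis by simp
  qed
  have "sesq S K w w = sesq S K v v - sesq S K v d - sesq S K d v + sesq S K d d"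
    unfolding w_def by (simp add: sesq_diff_left sesq_diff_right)
  also have "sesq S K v d = complex_of_real r * cnj s * s"
    unfolding d_def using sesq_delta_right[OF assms(1,3)] ls by simp
  also have "sesq S K d v = cnj s * (complex_of_real r * s)"
    unfolding d_def using sesq_delta_left[OF assms(1,3)] rs by simp
  also have "sesq S K d d = cnj s * (K c c * s)"
    unfolding d_def using sesq_delta_left[OF assms(1,3)] assms(1,3)
    by (simp add: if_distrib cong: if_cong)
  finally have 1: "sesq S K w w = sesq S K v v - complex_of_real r * cnj s * s"
    using assms(4) by (simp add: algebra_simps)
  have "sesq S (\<lambda>x y. K x y - K x c * K c y / complex_of_real r) v v
      = sesq S K v v - (\<Sum>x\<in>S. \<Sum>y\<in>S. (cnj (v x) * K x c) * (K c y * v y)) / complex_of_real r"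
    unfolding sesq_def by (simp add: algebra_simps sum_subtractf sum_divide_distrib)
  also have "(\<Sum>x\<in>S. \<Sum>y\<in>S. (cnj (v x) * K x c) * (K c y * v y)) = (\<Sum>x\<in>S. cnj (v x) * K x c) * (\<Sum>y\<in>S. K c y * v y)"
    by (simp add: sum_product)
  finally have "sesq S (\<lambda>x y. K x y - K x c * K c y / complex_of_real r) v v = sesq S K w w"
    using 1 rs ls assms(5) by simp
  then show "0 \<le> sesq S (\<lambda>x y. K x y - K x c * K c y / complex_of_real r) v v"
    using assms(2) unfolding psd_def by metis
qed

lemma psd_rank_one: "psd S (\<lambda>x y. g x * cnj (g y))"
  unfolding psd_def
proof
  fix v
  have "sesq S (\<lambda>x y. g x * cnj (g y)) v v = (\<Sum>x\<in>S. cnj (v x) * g x) * cnj (\<Sum>x\<in>S. cnj (v x) * g x)"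
    unfolding sesq_def by (simp add: sum_product algebra_simps)
  also have "\<dots> = complex_of_real ((cmod (\<Sum>x\<in>S. cnj (v x) * g x))\<^sup>2)"
    by (metis complex_norm_square of_real_power)
  finally show "0 \<le> sesq S (\<lambda>x y. g x * cnj (g y)) v v" by (simp add: less_eq_complex_def)
qed

lemma psd_add: "psd S K \<Longrightarrow> psd S K' \<Longrightarrow> psd S (\<lambda>x y. K x y + K' x y)"
  unfolding psd_def sesq_def by (simp add: algebra_simps sum.distrib add_nonneg_nonneg)

lemma psd_zero_out:
  assumes "psd S K"
  shows "psd S (\<lambda>x y. if x = c \<or> y = c then 0 else K x y)"
  unfolding psd_def
proof
  fix v :: "'a \<Rightarrow> complex"
  let ?w = "v(c := 0)"
  have "sesq S (\<lambda>x y. if x = c \<or> y = c then 0 else K x y) v v = sesq S K ?w ?w"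
    unfolding sesq_def by (intro sum.cong refl) auto
  then show "0 \<le> sesq S (\<lambda>x y. if x = c \<or> y = c then 0 else K x y) v v"
    using assms unfolding psd_def by metis
qed

lemma psd_block:
  assumes "finite A" "finite B" "A \<inter> B = {}" "psd A K" "psd B K"
  shows "psd (A \<union> B) (\<lambda>x y. if (x \<in> A \<and> y \<in> A) \<or> (x \<in> B \<and> y \<in> B) then K x y else 0)"
  unfolding psd_def
proof
  fix v
  let ?K = "\<lambda>x y. if (x \<in> A \<and> y \<in> A) \<or> (x \<in> B \<and> y \<in> B) then K x y else 0"
  have dA: "\<And>x. x \<in> A \<Longrightarrow> x \<notin> B" and dB: "\<And>x. x \<in> B \<Longrightarrow> x \<notin> A" using assms(3) by blast+
  have rA: "(\<Sum>y\<in>A\<union>B. cnj (v x) * ?K x y * v y) = (\<Sum>y\<in>A. cnj (v x) * K x y * v y)" if "x \<in> A" for x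
  proof -
    have "(\<Sum>y\<in>A\<union>B. cnj (v x) * ?K x y * v y) = (\<Sum>y\<in>A. cnj (v x) * ?K x y * v y) + (\<Sum>y\<in>B. cnj (v x) * ?K x y * v y)"
      using assms by (simp add: sum.union_disjoint)
    also have "(\<Sum>y\<in>B. cnj (v x) * ?K x y * v y) = 0" using that dA dB by (intro sum.neutral) auto
    also have "(\<Sum>y\<in>A. cnj (v x) * ?K x y * v y) = (\<Sum>y\<in>A. cnj (v x) * K x y * v y)" using that by (intro sum.cong) auto
    finally show ?thesis by simp
  qed
  have rB: "(\<Sum>y\<in>A\<union>B. cnj (v x) * ?K x y * v y) = (\<Sum>y\<in>B. cnj (v x) * K x y * v y)" if "x \<in> B" for x
  proof -
    have "(\<Sum>y\<in>A\<union>B. cnj (v x) * ?K x y * v y) = (\<Sum>y\<in>A. cnj (v x) * ?K x y * v y) + (\<Sum>y\<in>B. cnj (v x) * ?K x y * v y)"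
      using assms by (simp add: sum.union_disjoint)
    also have "(\<Sum>y\<in>A. cnj (v x) * ?K x y * v y) = 0" using that dA dB by (intro sum.neutral) auto
    also have "(\<Sum>y\<in>B. cnj (v x) * ?K x y * v y) = (\<Sum>y\<in>B. cnj (v x) * K x y * v y)" using that by (intro sum.cong) auto
    finally show ?thesis by simp
  qed
  have "sesq (A \<union> B) ?K v v = (\<Sum>x\<in>A. \<Sum>y\<in>A\<union>B. cnj (v x) * ?K x y * v y) + (\<Sum>x\<in>B. \<Sum>y\<in>A\<union>B. cnj (v x) * ?K x y * v y)"
    unfolding sesq_def using assms by (simp add: sum.union_disjoint)
  also have "(\<Sum>x\<in>A. \<Sum>y\<in>A\<union>B. cnj (v x) * ?K x y * v y) = sesq A K v v"
    unfolding sesq_def by (rule sum.cong[OF refl]) (rule rA)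
  also have "(\<Sum>x\<in>B. \<Sum>y\<in>A\<union>B. cnj (v x) * ?K x y * v y) = sesq B K v v"
    unfolding sesq_def by (rule sum.cong[OF refl]) (rule rB)
  finally show "0 \<le> sesq (A \<union> B) ?K v v" using assms(4,5) unfolding psd_def
    by (metis add_nonneg_nonneg)
qed




definition pvec :: "('a \<Rightarrow> 'a \<Rightarrow> complex) \<Rightarrow> 'a \<Rightarrow> 'a \<Rightarrow> complex" where
  "pvec K c x = (if Re (K c c) = 0 then 0 else K x c / complex_of_real (sqrt (Re (K c c))))"

lemma psd_pivot:
  assumes "finite S" "psd S K" "c \<in> S"
  shows "psd S (\<lambda>x y. K x y - pvec K c x * cnj (pvec K c y)) \<and>
     (\<forall>y\<in>S. K c y - pvec K c c * cnj (pvec K c y) = 0 \<and> K y c - pvec K c y * cnj (pvec K c c) = 0)"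
proof -
  define r where "r = Re (K c c)"
  have Kcc: "K c c = complex_of_real r" "r \<ge> 0"
    using psd_diag[OF assms] by (auto simp: r_def less_eq_complex_def complex_eq_iff)
  show ?thesis
  proof (cases "r = 0")
    case True
    have z: "K c y = 0" if "y \<in> S" for y using psd_zero_row[OF assms that] Kcc True by simp
    have z2: "K y c = 0" if "y \<in> S" for y using z[OF that] psd_herm[OF assms(1,2,3) that] by simp
    have pz: "pvec K c = (\<lambda>_. 0)" using True unfolding pvec_def r_def by auto
    have e: "(\<lambda>x y. K x y - pvec K c x * cnj (pvec K c y)) = K" unfolding pz by simp
    show ?thesis unfolding e using assms(2) z z2 pz by simp
  next
    case False
    then have rp: "r > 0" using Kcc by simp
    define g where "g = pvec K c"
    have gd: "g x = K x c / complex_of_real (sqrt r)" for x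
      using False unfolding g_def pvec_def r_def by simp
    have gg: "g x * cnj (g y) = K x c * K c y / complex_of_real r" if "y \<in> S" for x y
    proof -
      have "cnj (K y c) = K c y" using psd_herm[OF assms(1,2,3) that] by simp
      then have "cnj (g y) = K c y / complex_of_real (sqrt r)" unfolding gd by simp
      then have "g x * cnj (g y) = K x c * K c y / (complex_of_real (sqrt r) * complex_of_real (sqrt r))"
        unfolding gd by (simp; blast)
      also have "complex_of_real (sqrt r) * complex_of_real (sqrt r) = complex_of_real r"
        using rp by (simp flip: of_real_mult)
      finally show ?thesis .
    qed
    have "psd S (\<lambda>x y. K x y - K x c * K c y / complex_of_real r)"
      by (rule psd_schur[OF assms Kcc(1) rp])
    then have "psd S (\<lambda>x y. K x y - g x * cnj (g y))"
      by (subst psd_cong[where K' = "\<lambda>x y. K x y - K x c * K c y / complex_of_real r"]) (auto simp: gg)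
    moreover have "K c y - g c * cnj (g y) = 0 \<and> K y c - g y * cnj (g c) = 0" if "y \<in> S" for y
      using gg[OF that, of c] gg[OF assms(3), of y] Kcc rp by auto
    ultimately show ?thesis unfolding g_def by blast
  qed
qed

lemma psd_complete:
  assumes "finite A" "finite B" "psd A K" "psd B K"
  shows "\<exists>K'. psd (A \<union> B) K' \<and> (\<forall>x\<in>A. \<forall>y\<in>A. K' x y = K x y) \<and> (\<forall>x\<in>B. \<forall>y\<in>B. K' x y = K x y)"
  using assms
proof (induction "card (A \<inter> B)" arbitrary: B K rule: less_induct)
  case less
  show ?case
  proof (cases "A \<inter> B = {}")
    case True
    show ?thesis
      by (rule exI[of _ "\<lambda>x y. if (x \<in> A \<and> y \<in> A) \<or> (x \<in> B \<and> y \<in> B) then K x y else 0"])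
         (use psd_block[OF less.prems(1,2) True less.prems(3,4)] in auto)
  next
    case False
    then obtain c where c: "c \<in> A" "c \<in> B" by blast
    have pA: "psd A K" and pB: "psd B K" using less.prems by auto
    define g where "g = pvec K c"
    define K1 where "K1 x y = K x y - g x * cnj (g y)" for x y
    have pA1: "psd A K1" and zA: "\<forall>y\<in>A. K1 c y = 0 \<and> K1 y c = 0"
      using psd_pivot[OF less.prems(1) pA c(1)] unfolding K1_def g_def by auto
    have pB1: "psd B K1" and zB: "\<forall>y\<in>B. K1 c y = 0 \<and> K1 y c = 0"
      using psd_pivot[OF less.prems(2) pB c(2)] unfolding K1_def g_def by auto
    define B' where "B' = B - {c}"
    have fB': "finite B'" using less.prems(2) unfolding B'_def by simp
    have pB': "psd B' K1" using psd_subset[OF less.prems(2) _ pB1] unfolding B'_def by blast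
    have lt: "card (A \<inter> B') < card (A \<inter> B)"
    proof -
      have "A \<inter> B' = (A \<inter> B) - {c}" unfolding B'_def by blast
      moreover have "finite (A \<inter> B)" using less.prems(1) by simp
      moreover have "c \<in> A \<inter> B" using c by blast
      ultimately show ?thesis using card_Diff1_less[of "A \<inter> B" c] by simp
    qed
    obtain K2 where K2: "psd (A \<union> B') K2" "\<forall>x\<in>A. \<forall>y\<in>A. K2 x y = K1 x y" "\<forall>x\<in>B'. \<forall>y\<in>B'. K2 x y = K1 x y"
      using less.hyps[OF lt less.prems(1) fB' pA1 pB'] by blast
    have AB: "A \<union> B' = A \<union> B" unfolding B'_def using c by blast
    define K3 where "K3 x y = (if x = c \<or> y = c then 0 else K2 x y)" for x y
    have pK3: "psd (A \<union> B) K3" using psd_zero_out[OF K2(1), of c] AB unfolding K3_def by simp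
    define K' where "K' x y = K3 x y + g x * cnj (g y)" for x y
    have pK': "psd (A \<union> B) K'" unfolding K'_def by (rule psd_add[OF pK3 psd_rank_one])
    have eA: "K' x y = K x y" if "x \<in> A" "y \<in> A" for x y
    proof -
      have "K3 x y = K1 x y" using K2(2) zA that unfolding K3_def by auto
      then show ?thesis unfolding K'_def K1_def by simp
    qed
    have eB: "K' x y = K x y" if "x \<in> B" "y \<in> B" for x y
    proof -
      have "K3 x y = K1 x y" using K2(3) zB that unfolding K3_def B'_def by auto
      then show ?thesis unfolding K'_def K1_def by simp
    qed
    show ?thesis using pK' eA eB by blast
  qed
qed

lemma psd_decomp:
  assumes "finite S" "psd S K"
  shows "\<exists>(R::nat) g. \<forall>x\<in>S. \<forall>y\<in>S. K x y = (\<Sum>r<R. g r x * cnj (g r y))"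
  using assms
proof (induction S arbitrary: K rule: finite_induct)
  case empty
  then show ?case by auto
next
  case (insert c F)
  define g where "g = pvec K c"
  define K1 where "K1 = (\<lambda>x y. K x y - g x * cnj (g y))"
  have fin: "finite (insert c F)" using insert.hyps(1) by simp
  note pv = psd_pivot[OF fin insert.prems insertI1]
  have p1: "psd (insert c F) K1" using pv unfolding K1_def g_def by (rule conjunct1)
  have z: "\<forall>y\<in>insert c F. K1 c y = 0 \<and> K1 y c = 0" using pv unfolding K1_def g_def by simp
  have "psd F K1" by (rule psd_subset[OF fin subset_insertI p1])
  then obtain R :: nat and h where h: "\<forall>x\<in>F. \<forall>y\<in>F. K1 x y = (\<Sum>r<R. h r x * cnj (h r y))"
    using insert.IH[OF \<open>psd F K1\<close>] by blast
  define h' where "h' r x = (if r = R then g x else if x = c then 0 else h r x)" for r x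
  have "K x y = (\<Sum>r<Suc R. h' r x * cnj (h' r y))" if "x \<in> insert c F" "y \<in> insert c F" for x y
  proof -
    have s: "(\<Sum>r<R. h' r x * cnj (h' r y)) = K1 x y"
    proof (cases "x = c \<or> y = c")
      case True
      then have "(\<Sum>r<R. h' r x * cnj (h' r y)) = 0" unfolding h'_def by (intro sum.neutral) auto
      then show ?thesis using z that True by auto
    next
      case False
      then have xy: "x \<in> F" "y \<in> F" using that by auto
      have "(\<Sum>r<R. h' r x * cnj (h' r y)) = (\<Sum>r<R. h r x * cnj (h r y))"
        using False unfolding h'_def by (intro sum.cong) auto
      then show ?thesis using h xy by simp
    qed
    have "(\<Sum>r<Suc R. h' r x * cnj (h' r y)) = (\<Sum>r<R. h' r x * cnj (h' r y)) + h' R x * cnj (h' R y)"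
      by simp
    also have "\<dots> = K1 x y + g x * cnj (g y)" using s unfolding h'_def by simp
    finally show ?thesis unfolding K1_def by simp
  qed
  note main = this
  have "\<forall>x\<in>insert c F. \<forall>y\<in>insert c F. K x y = (\<Sum>r<Suc R. h' r x * cnj (h' r y))"
    using main by blast
  then show ?case by (rule exI[of _ "Suc R", OF exI[of _ h']])
qed



lemma has_integral_cis_int:
  "((\<lambda>t. cis (of_int m * t)) has_integral (if m = 0 then complex_of_real (2*pi) else 0)) {0..2*pi}"
proof (cases "m = 0")
  case True
  show ?thesis using True has_integral_const_real[of "1::complex" 0 "2*pi"] by (simp add: scaleR_conv_of_real)
next
  case False
  define A where "A = \<i> * complex_of_int m"
  have A0: "A \<noteq> 0" using False by (simp add: A_def)
  have e: "exp (t *\<^sub>R A) = cis (of_int m * t)" for t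
    by (simp add: A_def cis_conv_exp scaleR_conv_of_real algebra_simps)
  have "((\<lambda>t. exp (t *\<^sub>R A) * A) has_integral (exp ((2*pi) *\<^sub>R A) - exp (0 *\<^sub>R A))) {0..2*pi}"
    by (rule fundamental_theorem_of_calculus) (auto intro: exp_scaleR_has_vector_derivative_right)
  then have "((\<lambda>t. exp (t *\<^sub>R A) * A * inverse A) has_integral ((exp ((2*pi) *\<^sub>R A) - exp (0 *\<^sub>R A)) * inverse A)) {0..2*pi}"
    by (rule has_integral_mult_left)
  moreover have "exp ((2*pi) *\<^sub>R A) = 1"
  proof -
    have "exp ((2*pi) *\<^sub>R A) = cis (2 * pi * of_int m)" using e[of "2*pi"] by (simp add: mult.commute)
    also have "\<dots> = 1" by (rule cis_multiple_2pi) simp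
    finally show ?thesis .
  qed
  moreover have "(\<lambda>t. exp (t *\<^sub>R A) * A * inverse A) = (\<lambda>t. exp (t *\<^sub>R A))"
    using A0 by (simp add: mult.assoc)
  ultimately have "((\<lambda>t. exp (t *\<^sub>R A)) has_integral 0) {0..2*pi}" by simp
  then show ?thesis using False e by simp
qed

definition Dset :: "nat \<Rightarrow> int set" where
  "Dset n = {1 - int n .. int n - 1}"

definition bandc :: "nat \<Rightarrow> (int \<Rightarrow> complex) \<Rightarrow> bool" where
  "bandc n c \<longleftrightarrow> (\<forall>k::int. \<bar>k\<bar> \<ge> int n \<longrightarrow> c k = 0)"

lemma Dset_iff: "k \<in> Dset n \<longleftrightarrow> \<bar>k\<bar> < int n"
  unfolding Dset_def by auto

lemma finite_Dset[simp]: "finite (Dset n)"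
  unfolding Dset_def by simp

definition tp :: "nat \<Rightarrow> (int \<Rightarrow> complex) \<Rightarrow> complex \<Rightarrow> complex" where
  "tp n c z = (\<Sum>d\<in>Dset n. c d * z powi d)"

lemma tp_fourier:
  assumes "bandc n c"
  shows "fourier_coeff (tp n c) = c"
proof
  fix k :: int
  have "((\<lambda>t. tp n c (cis t) * cis (- (of_int k * t))) has_integral
          (\<Sum>d\<in>Dset n. c d * (if d - k = 0 then complex_of_real (2*pi) else 0))) {0..2*pi}"
  proof -
    have eq: "tp n c (cis t) * cis (- (of_int k * t)) = (\<Sum>d\<in>Dset n. c d * cis (of_int (d - k) * t))" for t
      unfolding tp_def sum_distrib_right
      by (intro sum.cong refl) (simp add: cis_power_int mult.assoc cis_mult algebra_simps)
    have "((\<lambda>t. \<Sum>d\<in>Dset n. c d * cis (of_int (d - k) * t)) has_integral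
          (\<Sum>d\<in>Dset n. c d * (if d - k = 0 then complex_of_real (2*pi) else 0))) {0..2*pi}"
      by (intro has_integral_sum finite_Dset has_integral_mult_right has_integral_cis_int)
    then show ?thesis unfolding eq .
  qed
  then have "integral {0..2*pi} (\<lambda>t. tp n c (cis t) * cis (- (of_int k * t)))
      = (\<Sum>d\<in>Dset n. c d * (if d - k = 0 then complex_of_real (2*pi) else 0))"
    by (rule integral_unique)
  also have "\<dots> = (if k \<in> Dset n then c k * complex_of_real (2*pi) else 0)"
    by (simp add: if_distrib cong: if_cong)
  also have "\<dots> = c k * complex_of_real (2*pi)"
    using assms unfolding bandc_def Dset_iff by auto
  finally show "fourier_coeff (tp n c) k = c k"
    unfolding fourier_coeff_def by simp
qed

lemma tp_trig:
  assumes "bandc n c"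
  shows "tp n c \<in> trig_space n"
proof -
  have "continuous_on (sphere 0 1) (tp n c)"
    unfolding tp_def by (intro continuous_intros) auto
  moreover have "\<forall>k::int. \<bar>k\<bar> \<ge> int n \<longrightarrow> fourier_coeff (tp n c) k = 0"
    using assms unfolding tp_fourier[OF assms] bandc_def by blast
  ultimately show ?thesis unfolding trig_space_def by blast
qed

lemma trig_bandc: "f \<in> trig_space n \<Longrightarrow> bandc n (fourier_coeff f)"
  unfolding trig_space_def bandc_def by blast



definition Top :: "(int \<Rightarrow> complex) \<Rightarrow> hop" where
  "Top c x = (\<lambda>i. infsum (\<lambda>j. c (int i - int j) * x j) UNIV)"

lemma toeplitz_op_Top: "toeplitz_op f = Top (fourier_coeff f)"
  unfolding toeplitz_op_def Top_def by (intro ext) simp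

lemma system_eq: "toeplitz_system n = Top ` {c. bandc n c}"
proof
  show "toeplitz_system n \<subseteq> Top ` {c. bandc n c}"
    unfolding toeplitz_system_def using trig_bandc toeplitz_op_Top by fastforce
  show "Top ` {c. bandc n c} \<subseteq> toeplitz_system n"
  proof
    fix T assume "T \<in> Top ` {c. bandc n c}"
    then obtain c where c: "bandc n c" "T = Top c" by blast
    then have "T = toeplitz_op (tp n c)" using tp_fourier[OF c(1)] toeplitz_op_Top by simp
    then show "T \<in> toeplitz_system n" unfolding toeplitz_system_def using tp_trig[OF c(1)] by blast
  qed
qed

lemma infsum_single:
  fixes f :: "'a \<Rightarrow> complex"
  assumes "\<And>j. j \<noteq> a \<Longrightarrow> f j = 0"
  shows "infsum f UNIV = f a"
proof -
  have "infsum f UNIV = infsum f {a}"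
    using assms by (intro infsum_cong_neutral) auto
  then show ?thesis by simp
qed

lemma infsum_fin:
  fixes f :: "'a \<Rightarrow> complex"
  assumes "finite F" "\<And>j. j \<notin> F \<Longrightarrow> f j = 0"
  shows "infsum f UNIV = sum f F"
proof -
  have "infsum f UNIV = infsum f F"
    using assms by (intro infsum_cong_neutral) auto
  then show ?thesis using assms(1) by simp
qed

lemma Top_finite:
  assumes "bandc n c"
  shows "Top c x i = (\<Sum>j<i+n. c (int i - int j) * x j)"
  unfolding Top_def
proof (rule infsum_fin)
  fix j assume "j \<notin> {..<i+n}"
  then have "\<bar>int i - int j\<bar> \<ge> int n" by auto
  then show "c (int i - int j) * x j = 0" using assms unfolding bandc_def by simp
qed simp

lemma bandc_add: "bandc n c \<Longrightarrow> bandc n c' \<Longrightarrow> bandc n (\<lambda>k. c k + c' k)"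
  unfolding bandc_def by simp

lemma bandc_scale: "bandc n c \<Longrightarrow> bandc n (\<lambda>k. a * c k)"
  unfolding bandc_def by simp

lemma Top_add:
  assumes "bandc n c" "bandc n c'"
  shows "op_add (Top c) (Top c') = Top (\<lambda>k. c k + c' k)"
  unfolding op_add_def
  by (intro ext) (simp add: Top_finite[OF assms(1)] Top_finite[OF assms(2)]
      Top_finite[OF bandc_add[OF assms]] sum.distrib algebra_simps)

lemma Top_scale:
  assumes "bandc n c"
  shows "op_scale a (Top c) = Top (\<lambda>k. a * c k)"
  unfolding op_scale_def
  by (intro ext) (simp add: Top_finite[OF assms] Top_finite[OF bandc_scale[OF assms]]
      sum_distrib_left algebra_simps)

definition dl :: "int \<Rightarrow> int \<Rightarrow> complex" where
  "dl d k = (if k = d then 1 else 0)"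

lemma bandc_dl: "d \<in> Dset n \<Longrightarrow> bandc n (dl d)"
  unfolding bandc_def dl_def Dset_iff by auto

definition coef :: "hop \<Rightarrow> int \<Rightarrow> complex" where
  "coef T d = T (\<lambda>j. if j = nat (- d) then 1 else 0) (nat d)"

lemma coef_Top: "coef (Top c) d = c d"
proof -
  have "coef (Top c) d = c (int (nat d) - int (nat (- d)))"
    unfolding coef_def Top_def by (subst infsum_single[of "nat (- d)"]) auto
  also have "int (nat d) - int (nat (- d)) = d" by simp
  finally show ?thesis .
qed

lemma Top_inj: "Top c = Top c' \<Longrightarrow> c = c'"
  by (metis coef_Top ext)

lemma coef_add: "coef (op_add T S) d = coef T d + coef S d"
  unfolding coef_def op_add_def by simp

lemma coef_scale: "coef (op_scale a T) d = a * coef T d"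
  unfolding coef_def op_scale_def by simp

lemma bandc_expand:
  assumes "bandc n c"
  shows "c = (\<lambda>k. \<Sum>d\<in>Dset n. c d * dl d k)"
proof
  fix k
  show "c k = (\<Sum>d\<in>Dset n. c d * dl d k)"
  proof (cases "k \<in> Dset n")
    case True
    then show ?thesis unfolding dl_def by (simp add: if_distrib cong: if_cong)
  next
    case False
    then have "c k = 0" using assms unfolding bandc_def Dset_iff by simp
    moreover have "(\<Sum>d\<in>Dset n. c d * dl d k) = 0" using False unfolding dl_def
      by (intro sum.neutral) auto
    ultimately show ?thesis by simp
  qed
qed

lemma dual_expand:
  assumes phi: "\<phi> \<in> dual_space n" and c: "bandc n c"
  shows "\<phi> (Top c) = (\<Sum>d\<in>Dset n. c d * \<phi> (Top (dl d)))"
proof -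
  have lin_add: "\<phi> (op_add (Top a) (Top b)) = \<phi> (Top a) + \<phi> (Top b)" if "bandc n a" "bandc n b" for a b
    using phi that unfolding dual_space_def system_eq by blast
  have lin_scale: "\<phi> (op_scale s (Top a)) = s * \<phi> (Top a)" if "bandc n a" for a s
    using phi that unfolding dual_space_def system_eq by blast
  have b0: "bandc n (\<lambda>k. 0)" unfolding bandc_def by simp
  have z: "\<phi> (Top (\<lambda>k. 0)) = 0"
  proof -
    have "op_scale 0 (Top (\<lambda>k. 0)) = Top (\<lambda>k. 0)" using Top_scale[OF b0, of 0] by simp
    then show ?thesis using lin_scale[OF b0, of 0] by simp
  qed
  have bE: "bandc n (\<lambda>k. \<Sum>d\<in>E. c d * dl d k)" if "E \<subseteq> Dset n" for E
    using that unfolding bandc_def dl_def by (auto simp: Dset_iff subset_iff intro!: sum.neutral)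
  have "E \<subseteq> Dset n \<Longrightarrow> \<phi> (Top (\<lambda>k. \<Sum>d\<in>E. c d * dl d k)) = (\<Sum>d\<in>E. c d * \<phi> (Top (dl d)))" for E
  proof (induction E rule: infinite_finite_induct)
    case (infinite E)
    then have False using finite_subset[OF infinite(2)] by simp
    then show ?case ..
  next
    case empty
    then show ?case using z by simp
  next
    case (insert e E)
    have eD: "e \<in> Dset n" and ED: "E \<subseteq> Dset n" using insert.prems by auto
    have "(\<lambda>k. \<Sum>d\<in>insert e E. c d * dl d k) = (\<lambda>k. c e * dl e k + (\<Sum>d\<in>E. c d * dl d k))"
      using insert.hyps by simp
    then have "Top (\<lambda>k. \<Sum>d\<in>insert e E. c d * dl d k)
        = op_add (op_scale (c e) (Top (dl e))) (Top (\<lambda>k. \<Sum>d\<in>E. c d * dl d k))"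
      using Top_scale[OF bandc_dl[OF eD], of "c e"]
        Top_add[OF bandc_scale[OF bandc_dl[OF eD]] bE[OF ED]] by simp
    moreover have "op_scale (c e) (Top (dl e)) = Top (\<lambda>k. c e * dl e k)"
      by (rule Top_scale[OF bandc_dl[OF eD]])
    ultimately have "\<phi> (Top (\<lambda>k. \<Sum>d\<in>insert e E. c d * dl d k))
        = \<phi> (op_scale (c e) (Top (dl e))) + \<phi> (Top (\<lambda>k. \<Sum>d\<in>E. c d * dl d k))"
      using lin_add[OF bandc_scale[OF bandc_dl[OF eD]] bE[OF ED]] by simp
    also have "\<dots> = c e * \<phi> (Top (dl e)) + (\<Sum>d\<in>E. c d * \<phi> (Top (dl d)))"
      using lin_scale[OF bandc_dl[OF eD]] insert.IH[OF ED] by simp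
    finally show ?case using insert.hyps by simp
  qed
  from this[OF order_refl] show ?thesis using bandc_expand[OF c] by simp
qed



lemma Top_dl_apply: "Top (dl e) y i = (if int i - e \<ge> 0 then y (nat (int i - e)) else 0)"
proof (cases "int i - e \<ge> 0")
  case True
  have "Top (dl e) y i = dl e (int i - int (nat (int i - e))) * y (nat (int i - e))"
    unfolding Top_def by (rule infsum_single) (auto simp: dl_def)
  then show ?thesis using True by (simp add: dl_def)
next
  case False
  have "Top (dl e) y i = 0"
    unfolding Top_def by (rule infsum_0) (use False in \<open>auto simp: dl_def\<close>)
  then show ?thesis using False by simp
qed

lemma infsum_finite_sum:
  fixes f :: "'i \<Rightarrow> 'a \<Rightarrow> complex"
  assumes "finite I" "\<And>i. i \<in> I \<Longrightarrow> f i summable_on A"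
  shows "(\<lambda>j. \<Sum>i\<in>I. f i j) summable_on A \<and> infsum (\<lambda>j. \<Sum>i\<in>I. f i j) A = (\<Sum>i\<in>I. infsum (f i) A)"
  using assms
proof (induction I rule: finite_induct)
  case empty
  then show ?case by simp
next
  case (insert i I)
  have s1: "f i summable_on A" using insert.prems by simp
  have IH: "(\<lambda>j. \<Sum>i\<in>I. f i j) summable_on A" "infsum (\<lambda>j. \<Sum>i\<in>I. f i j) A = (\<Sum>i\<in>I. infsum (f i) A)"
    using insert.IH insert.prems by auto
  show ?case
    using summable_on_add[OF s1 IH(1)] infsum_add[OF s1 IH(1)] IH(2) insert.hyps by simp
qed

lemma prod_summable:
  fixes u w :: "int \<Rightarrow> complex"
  assumes "(\<lambda>j. (cmod (u j))\<^sup>2) summable_on UNIV" "(\<lambda>j. (cmod (w j))\<^sup>2) summable_on UNIV"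
  shows "(\<lambda>j. u j * cnj (w j)) summable_on UNIV"
proof -
  have g: "(\<lambda>j. (cmod (u j))\<^sup>2 + (cmod (w j))\<^sup>2) summable_on UNIV"
    by (rule summable_on_add[OF assms])
  have n: "(\<lambda>j. norm (u j * cnj (w j))) summable_on UNIV"
  proof (rule summable_on_comparison_test[OF g])
    fix j :: int
    have "cmod (u j) * cmod (w j) \<le> (cmod (u j))\<^sup>2 + (cmod (w j))\<^sup>2"
      by (smt (verit) norm_ge_zero power2_eq_square mult_left_mono mult_right_mono sum_squares_bound)
    then show "norm (u j * cnj (w j)) \<le> (cmod (u j))\<^sup>2 + (cmod (w j))\<^sup>2"
      by (simp add: norm_mult)
  qed simp
  show ?thesis by (rule abs_summable_summable[OF n])
qed

definition Yext :: "nat \<Rightarrow> hvec \<Rightarrow> int \<Rightarrow> complex" where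
  "Yext a y j = (if j + int a \<ge> 0 then y (nat (j + int a)) else 0)"

lemma Yext_l2:
  assumes "in_l2 y"
  shows "(\<lambda>j. (cmod (Yext a y j))\<^sup>2) summable_on UNIV"
proof -
  have "(\<lambda>j. (cmod (Yext a y j))\<^sup>2) summable_on UNIV \<longleftrightarrow> (\<lambda>j. (cmod (Yext a y j))\<^sup>2) summable_on {j. j \<ge> - int a}"
    by (intro summable_on_cong_neutral) (auto simp: Yext_def)
  also have "\<dots> \<longleftrightarrow> (\<lambda>k. (cmod (y k))\<^sup>2) summable_on UNIV"
    by (rule summable_on_reindex_bij_witness[where j = "\<lambda>j. nat (j + int a)" and i = "\<lambda>k. int k - int a"])
       (auto simp: Yext_def)
  finally show ?thesis using assms unfolding in_l2_def by simp
qed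

lemma l2_inner_shift:
  "l2_inner (Top (dl (int a - int b)) (x b)) (x a) = infsum (\<lambda>j. Yext b (x b) j * cnj (Yext a (x a) j)) UNIV"
proof -
  have "l2_inner (Top (dl (int a - int b)) (x b)) (x a)
      = infsum (\<lambda>k. (if int k - int a + int b \<ge> 0 then x b (nat (int k - int a + int b)) else 0) * cnj (x a k)) UNIV"
    unfolding l2_inner_def Top_dl_apply by (intro infsum_cong) (simp add: algebra_simps)
  also have "\<dots> = infsum (\<lambda>j. Yext b (x b) j * cnj (Yext a (x a) j)) {j. j \<ge> - int a}"
    by (rule infsum_reindex_bij_witness[where j = "\<lambda>k. int k - int a" and i = "\<lambda>j. nat (j + int a)"])
       (auto simp: Yext_def algebra_simps)
  also have "\<dots> = infsum (\<lambda>j. Yext b (x b) j * cnj (Yext a (x a) j)) UNIV"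
    by (intro infsum_cong_neutral) (auto simp: Yext_def)
  finally show ?thesis .
qed

lemma opmat_shift_pos: "opmat_pos n (\<lambda>a b. Top (dl (int a - int b)))"
  unfolding opmat_pos_def
proof (intro allI impI)
  fix x :: "nat \<Rightarrow> hvec"
  assume l2: "\<forall>a<n. in_l2 (x a)"
  define Y where "Y a = Yext a (x a)" for a
  have Yl2: "(\<lambda>j. (cmod (Y a j))\<^sup>2) summable_on UNIV" if "a < n" for a
    unfolding Y_def using Yext_l2 l2 that by blast
  have sm: "(\<lambda>j. Y b j * cnj (Y a j)) summable_on UNIV" if "a < n" "b < n" for a b
    by (rule prod_summable[OF Yl2[OF that(2)] Yl2[OF that(1)]])
  have "(\<Sum>a<n. \<Sum>b<n. l2_inner (Top (dl (int a - int b)) (x b)) (x a))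
      = (\<Sum>a<n. \<Sum>b<n. infsum (\<lambda>j. Y b j * cnj (Y a j)) UNIV)"
    unfolding l2_inner_shift Y_def ..
  also have "\<dots> = (\<Sum>a<n. infsum (\<lambda>j. \<Sum>b<n. Y b j * cnj (Y a j)) UNIV)"
    using infsum_finite_sum[of "{..<n}" "\<lambda>b j. Y b j * cnj (Y a j)" UNIV for a] sm
    by (intro sum.cong refl) (simp add: infsum_finite_sum)
  also have "\<dots> = infsum (\<lambda>j. \<Sum>a<n. \<Sum>b<n. Y b j * cnj (Y a j)) UNIV"
  proof -
    have "(\<lambda>j. \<Sum>b<n. Y b j * cnj (Y a j)) summable_on UNIV" if "a < n" for a
      using infsum_finite_sum[of "{..<n}" "\<lambda>b j. Y b j * cnj (Y a j)" UNIV] sm that by auto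
    then show ?thesis
      using infsum_finite_sum[of "{..<n}" "\<lambda>a j. \<Sum>b<n. Y b j * cnj (Y a j)" UNIV] by auto
  qed
  also have "\<dots> \<ge> 0"
  proof (rule infsum_nonneg_complex)
    show "(\<lambda>j. \<Sum>a<n. \<Sum>b<n. Y b j * cnj (Y a j)) summable_on UNIV"
    proof -
      have "(\<lambda>j. \<Sum>b<n. Y b j * cnj (Y a j)) summable_on UNIV" if "a < n" for a
        using infsum_finite_sum[of "{..<n}" "\<lambda>b j. Y b j * cnj (Y a j)" UNIV] sm that by auto
      then show ?thesis
        using infsum_finite_sum[of "{..<n}" "\<lambda>a j. \<Sum>b<n. Y b j * cnj (Y a j)" UNIV] by auto
    qed
    fix j :: int
    have "(\<Sum>b<n. Y b j) * cnj (\<Sum>a<n. Y a j) = (\<Sum>b<n. \<Sum>a<n. Y b j * cnj (Y a j))"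
      by (simp add: sum_product cnj_sum)
    also have "\<dots> = (\<Sum>a<n. \<Sum>b<n. Y b j * cnj (Y a j))" by (rule sum.swap)
    finally have "(\<Sum>a<n. \<Sum>b<n. Y b j * cnj (Y a j)) = (\<Sum>b<n. Y b j) * cnj (\<Sum>a<n. Y a j)" ..
    also have "\<dots> = complex_of_real ((cmod (\<Sum>a<n. Y a j))\<^sup>2)"
      by (metis complex_norm_square of_real_power)
    finally show "0 \<le> (\<Sum>a<n. \<Sum>b<n. Y b j * cnj (Y a j))"
      by (simp add: less_eq_complex_def)
  qed
  finally show "cnonneg (\<Sum>a<n. \<Sum>b<n. l2_inner (Top (dl (int a - int b)) (x b)) (x a))"
    unfolding cnonneg_iff .
qed



lemma sum_prod_split: "sum f (A \<times> B) = (\<Sum>k\<in>A. \<Sum>a\<in>B. f (k, a))"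
  by (simp add: sum.cartesian_product)

lemma sesq_prod:
  "sesq (A \<times> B) K u v = (\<Sum>k\<in>A. \<Sum>a\<in>B. \<Sum>l\<in>A. \<Sum>b\<in>B. cnj (u (k,a)) * K (k,a) (l,b) * v (l,b))"
  unfolding sesq_def by (simp only: sum_prod_split)

lemma psd_image:
  assumes "inj_on h A" "psd A (\<lambda>x y. K (h x) (h y))"
  shows "psd (h ` A) K"
  unfolding psd_def
proof
  fix v :: "'b \<Rightarrow> complex"
  have "sesq (h ` A) K v v = sesq A (\<lambda>x y. K (h x) (h y)) (v \<circ> h) (v \<circ> h)"
    unfolding sesq_def by (simp add: sum.reindex[OF assms(1)])
  then show "0 \<le> sesq (h ` A) K v v" using assms(2) unfolding psd_def by simp
qed

lemma psd_pullback:
  assumes "finite Z" "finite X" "f ` Z \<subseteq> X" "psd X K"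
  shows "psd Z (\<lambda>z w. K (f z) (f w))"
  unfolding psd_def
proof
  fix u :: "'a \<Rightarrow> complex"
  define U where "U x = (\<Sum>z\<in>{z\<in>Z. f z = x}. u z)" for x
  have grp: "(\<Sum>z\<in>Z. F (f z) * G z) = (\<Sum>x\<in>X. F x * (\<Sum>z\<in>{z\<in>Z. f z = x}. G z))" for F :: "'b \<Rightarrow> complex" and G
  proof -
    have "(\<Sum>z\<in>Z. F (f z) * G z) = (\<Sum>x\<in>X. \<Sum>z\<in>{z\<in>Z. f z = x}. F (f z) * G z)"
      using sum.group[OF assms(1,2,3), of "\<lambda>z. F (f z) * G z"] by simp
    also have "\<dots> = (\<Sum>x\<in>X. F x * (\<Sum>z\<in>{z\<in>Z. f z = x}. G z))"
      by (intro sum.cong refl) (simp add: sum_distrib_left)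
    finally show ?thesis .
  qed
  have inner: "(\<Sum>w\<in>Z. K (f z) (f w) * u w) = (\<Sum>y\<in>X. K (f z) y * U y)" for z
    unfolding U_def by (rule grp)
  have "sesq Z (\<lambda>z w. K (f z) (f w)) u u = (\<Sum>z\<in>Z. cnj (u z) * (\<Sum>w\<in>Z. K (f z) (f w) * u w))"
    unfolding sesq_def by (simp add: sum_distrib_left mult.assoc)
  also have "\<dots> = (\<Sum>z\<in>Z. (\<Sum>y\<in>X. K (f z) y * U y) * cnj (u z))"
    unfolding inner by (simp only: mult.commute)
  also have "\<dots> = (\<Sum>x\<in>X. (\<Sum>y\<in>X. K x y * U y) * (\<Sum>z\<in>{z\<in>Z. f z = x}. cnj (u z)))"
    by (rule grp)
  also have "\<dots> = (\<Sum>x\<in>X. (\<Sum>y\<in>X. K x y * U y) * cnj (U x))"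
    unfolding U_def by (simp only: cnj_sum)
  also have "\<dots> = sesq X K U U"
    unfolding sesq_def by (simp add: sum_distrib_left sum_distrib_right mult_ac)
  finally show "0 \<le> sesq Z (\<lambda>z w. K (f z) (f w)) u u" using assms(4) unfolding psd_def by simp
qed

lemma psd_schur_prod:
  assumes "finite Z" "psd Z A" "psd Z B"
  shows "psd Z (\<lambda>x y. A x y * B x y)"
  unfolding psd_def
proof
  fix u :: "'a \<Rightarrow> complex"
  obtain R :: nat and g where g: "\<forall>x\<in>Z. \<forall>y\<in>Z. B x y = (\<Sum>r<R. g r x * cnj (g r y))"
    using psd_decomp[OF assms(1,3)] by blast
  define w where "w r x = u x * cnj (g r x)" for r x
  have "sesq Z (\<lambda>x y. A x y * B x y) u u = (\<Sum>x\<in>Z. \<Sum>y\<in>Z. \<Sum>r<R. cnj (w r x) * A x y * w r y)"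
    unfolding sesq_def w_def using g
    by (intro sum.cong refl) (simp add: sum_distrib_left sum_distrib_right algebra_simps)
  also have "\<dots> = (\<Sum>x\<in>Z. \<Sum>r<R. \<Sum>y\<in>Z. cnj (w r x) * A x y * w r y)"
    by (intro sum.cong refl) (rule sum.swap)
  also have "\<dots> = (\<Sum>r<R. \<Sum>x\<in>Z. \<Sum>y\<in>Z. cnj (w r x) * A x y * w r y)"
    by (rule sum.swap)
  also have "\<dots> = (\<Sum>r<R. sesq Z A (w r) (w r))" unfolding sesq_def ..
  finally show "0 \<le> sesq Z (\<lambda>x y. A x y * B x y) u u"
    using assms(2) unfolding psd_def by (simp add: sum_nonneg)
qed

definition Gk :: "(nat \<Rightarrow> nat \<Rightarrow> int \<Rightarrow> complex) \<Rightarrow> nat \<times> nat \<Rightarrow> nat \<times> nat \<Rightarrow> complex" where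
  "Gk \<tau> x y = \<tau> (snd x) (snd y) (int (fst x) - int (fst y))"

lemma psd_window:
  assumes "psd ({..<n} \<times> P) (Gk \<tau>)"
  shows "psd ({s..<s+n} \<times> P) (Gk \<tau>)"
proof -
  define h where "h = (\<lambda>x::nat\<times>nat. (fst x + s, snd x))"
  have img: "h ` ({..<n} \<times> P) = {s..<s+n} \<times> P"
  proof
    show "h ` ({..<n} \<times> P) \<subseteq> {s..<s+n} \<times> P" unfolding h_def by auto
    show "{s..<s+n} \<times> P \<subseteq> h ` ({..<n} \<times> P)"
    proof
      fix x assume x: "x \<in> {s..<s+n} \<times> P"
      show "x \<in> h ` ({..<n} \<times> P)"
        by (rule image_eqI[where x = "(fst x - s, snd x)"]) (use x in \<open>auto simp: h_def\<close>)
    qed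
  qed
  have inj: "inj_on h ({..<n} \<times> P)" unfolding h_def inj_on_def by auto
  have "psd ({..<n} \<times> P) (\<lambda>x y. Gk \<tau> (h x) (h y))"
    using assms by (subst psd_cong[where K' = "Gk \<tau>"]) (auto simp: h_def Gk_def)
  from psd_image[OF inj this] show ?thesis unfolding img .
qed

lemma band_complete:
  assumes G: "psd ({..<n} \<times> {..<p}) (Gk \<tau>)" and n1: "1 \<le> n" and N: "n \<le> N"
  shows "\<exists>H. psd ({..<N} \<times> {..<p}) H \<and>
    (\<forall>x\<in>{..<N} \<times> {..<p}. \<forall>y\<in>{..<N} \<times> {..<p}. \<bar>int (fst x) - int (fst y)\<bar> < int n \<longrightarrow> H x y = Gk \<tau> x y)"
  using N
proof (induction N rule: dec_induct)
  case base
  show ?case using G by blast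
next
  case (step N)
  obtain H where H: "psd ({..<N} \<times> {..<p}) H"
    "\<forall>x\<in>{..<N} \<times> {..<p}. \<forall>y\<in>{..<N} \<times> {..<p}. \<bar>int (fst x) - int (fst y)\<bar> < int n \<longrightarrow> H x y = Gk \<tau> x y"
    using step.IH by blast
  define A where "A = {..<N} \<times> {..<p}"
  define s where "s = Suc N - n"
  define B where "B = {s..<s+n} \<times> {..<p}"
  have sn: "s + n = Suc N" using step.hyps(1) n1 unfolding s_def by simp
  have pB: "psd B (Gk \<tau>)" unfolding B_def by (rule psd_window[OF G])
  define K where "K x y = (if x \<in> A \<and> y \<in> A then H x y else Gk \<tau> x y)" for x y
  have pA: "psd A K" using H(1) unfolding A_def by (subst psd_cong[where K' = H]) (auto simp: K_def A_def)
  have pB': "psd B K"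
  proof (subst psd_cong[where K' = "Gk \<tau>"])
    fix x y assume xy: "x \<in> B" "y \<in> B"
    have "\<bar>int (fst x) - int (fst y)\<bar> < int n" using xy sn unfolding B_def by auto
    then show "K x y = Gk \<tau> x y" using H(2) unfolding K_def A_def by auto
  qed (rule pB)
  obtain K' where K': "psd (A \<union> B) K'" "\<forall>x\<in>A. \<forall>y\<in>A. K' x y = K x y" "\<forall>x\<in>B. \<forall>y\<in>B. K' x y = K x y"
    using psd_complete[OF _ _ pA pB'] unfolding A_def B_def by auto
  have AB: "A \<union> B = {..<Suc N} \<times> {..<p}" using sn step.hyps(1) n1 unfolding A_def B_def s_def by auto
  have "K' x y = Gk \<tau> x y"
    if x: "x \<in> {..<Suc N} \<times> {..<p}" and y: "y \<in> {..<Suc N} \<times> {..<p}" and d: "\<bar>int (fst x) - int (fst y)\<bar> < int n" for x y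
  proof (cases "x \<in> A \<and> y \<in> A")
    case True
    then show ?thesis using K'(2) H(2) d unfolding K_def A_def by auto
  next
    case False
    then have "fst x = N \<or> fst y = N" using x y unfolding A_def by auto
    then have "x \<in> B \<and> y \<in> B" using x y d sn unfolding B_def by auto
    then show ?thesis using K'(3) False unfolding K_def by auto
  qed
  then show ?case using K'(1) AB by auto
qed

lemma opmat_to_psd:
  assumes "opmat_pos m (\<lambda>a b. Top (c a b))"
  shows "psd ({..<N} \<times> {..<m}) (\<lambda>x y. c (snd x) (snd y) (int (fst x) - int (fst y)))"
  unfolding psd_def
proof
  fix U :: "nat \<times> nat \<Rightarrow> complex"
  define x where "x a k = (if k < N then U (k, a) else 0)" for a k
  have l2: "in_l2 (x a)" for a
  proof -
    have "(\<lambda>k. (cmod (x a k))\<^sup>2) summable_on UNIV \<longleftrightarrow> (\<lambda>k. (cmod (x a k))\<^sup>2) summable_on {..<N}"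
      by (intro summable_on_cong_neutral) (auto simp: x_def)
    then show ?thesis unfolding in_l2_def by simp
  qed
  have T: "Top c' (x b) k = (\<Sum>l<N. c' (int k - int l) * U (l, b))" for c' b k
    unfolding Top_def by (subst infsum_fin[of "{..<N}"]) (auto simp: x_def)
  have I: "l2_inner (Top c' (x b)) (x a) = (\<Sum>k<N. \<Sum>l<N. cnj (U (k, a)) * c' (int k - int l) * U (l, b))" for c' a b
  proof -
    have "l2_inner (Top c' (x b)) (x a) = (\<Sum>k<N. Top c' (x b) k * cnj (x a k))"
      unfolding l2_inner_def by (subst infsum_fin[of "{..<N}"]) (auto simp: x_def)
    also have "\<dots> = (\<Sum>k<N. \<Sum>l<N. cnj (U (k, a)) * c' (int k - int l) * U (l, b))"
      unfolding T by (intro sum.cong refl) (simp add: x_def sum_distrib_right sum_distrib_left mult_ac)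
    finally show ?thesis .
  qed
  have "0 \<le> (\<Sum>a<m. \<Sum>b<m. l2_inner (Top (c a b) (x b)) (x a))"
    using assms l2 unfolding opmat_pos_def cnonneg_iff by blast
  also have "(\<Sum>a<m. \<Sum>b<m. l2_inner (Top (c a b) (x b)) (x a))
      = (\<Sum>a<m. \<Sum>b<m. \<Sum>k<N. \<Sum>l<N. cnj (U (k, a)) * c a b (int k - int l) * U (l, b))"
    unfolding I ..
  also have "\<dots> = (\<Sum>a<m. \<Sum>k<N. \<Sum>b<m. \<Sum>l<N. cnj (U (k, a)) * c a b (int k - int l) * U (l, b))"
    by (rule sum.cong[OF refl], rule sum.swap)
  also have "\<dots> = (\<Sum>k<N. \<Sum>a<m. \<Sum>b<m. \<Sum>l<N. cnj (U (k, a)) * c a b (int k - int l) * U (l, b))"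
    by (rule sum.swap)
  also have "\<dots> = (\<Sum>k<N. \<Sum>a<m. \<Sum>l<N. \<Sum>b<m. cnj (U (k, a)) * c a b (int k - int l) * U (l, b))"
    by (rule sum.cong[OF refl], rule sum.cong[OF refl], rule sum.swap)
  also have "\<dots> = sesq ({..<N} \<times> {..<m}) (\<lambda>x y. c (snd x) (snd y) (int (fst x) - int (fst y))) U U"
    unfolding sesq_prod by simp
  finally show "0 \<le> sesq ({..<N} \<times> {..<m}) (\<lambda>x y. c (snd x) (snd y) (int (fst x) - int (fst y))) U U" .
qed



lemma lin_nonneg:
  fixes s q :: complex
  assumes "\<And>t::nat. 0 \<le> s + of_nat t * q"
  shows "0 \<le> q"
proof -
  have i0: "Im s = 0" and r0: "Re s \<ge> 0" using assms[of 0] by (auto simp: less_eq_complex_def)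
  have "Im (s + q) = 0" using assms[of 1] by (auto simp: less_eq_complex_def)
  then have iq: "Im q = 0" using i0 by simp
  have "Re q \<ge> 0"
  proof (rule ccontr)
    assume "\<not> Re q \<ge> 0"
    then have qn: "Re q < 0" by simp
    define t where "t = nat \<lceil>Re s / (- Re q)\<rceil> + 1"
    have "real t > Re s / (- Re q)" unfolding t_def by linarith
    then have "real t * (- Re q) > Re s" using qn by (simp add: field_simps)
    then have "Re s + real t * Re q < 0" by (simp add: algebra_simps)
    moreover have "0 \<le> Re (s + of_nat t * q)" using assms[of t] by (simp add: less_eq_complex_def)
    ultimately show False by simp
  qed
  then show ?thesis using iq by (simp add: less_eq_complex_def)
qed

lemma S_step:
  fixes h :: "int \<Rightarrow> complex"
  assumes hz: "\<And>d. d \<notin> Dset n \<Longrightarrow> h d = 0" and N: "n \<le> N"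
  shows "(\<Sum>k<Suc N. \<Sum>l<Suc N. h (int k - int l)) = (\<Sum>k<N. \<Sum>l<N. h (int k - int l)) + (\<Sum>d\<in>Dset n. h d)"
proof -
  have "(\<Sum>k<Suc N. \<Sum>l<Suc N. h (int k - int l))
      = (\<Sum>k<N. \<Sum>l<N. h (int k - int l)) + ((\<Sum>k<N. h (int k - int N)) + (\<Sum>l<N. h (int N - int l)) + h 0)"
    by (simp add: sum.distrib algebra_simps)
  also have "(\<Sum>l<N. h (int N - int l)) = (\<Sum>d\<in>{1..int N}. h d)"
    by (rule sum.reindex_bij_witness[where j = "\<lambda>l. int N - int l" and i = "\<lambda>d. N - nat d"]) auto
  also have "(\<Sum>k<N. h (int k - int N)) = (\<Sum>d\<in>{- int N..-1}. h d)"
    by (rule sum.reindex_bij_witness[where j = "\<lambda>k. int k - int N" and i = "\<lambda>d. nat (d + int N)"]) auto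
  also have "(\<Sum>d\<in>{- int N..-1}. h d) + (\<Sum>d\<in>{1..int N}. h d) + h 0 = (\<Sum>d\<in>{- int N..int N}. h d)"
  proof -
    have "{- int N..int N} = {- int N..-1} \<union> ({0} \<union> {1..int N})" by auto
    then show ?thesis by (simp add: sum.union_disjoint algebra_simps)
  qed
  also have "(\<Sum>d\<in>{- int N..int N}. h d) = (\<Sum>d\<in>Dset n. h d)"
  proof (rule sum.mono_neutral_right)
    show "Dset n \<subseteq> {- int N..int N}" using N unfolding Dset_def by auto
    show "\<forall>i\<in>{- int N..int N} - Dset n. h i = 0" using hz by blast
  qed simp
  finally show ?thesis .
qed

lemma core:
  fixes \<tau> c :: "nat \<Rightarrow> nat \<Rightarrow> int \<Rightarrow> complex" and v :: "nat \<Rightarrow> nat \<Rightarrow> complex"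
  assumes G: "psd ({..<n} \<times> {..<p}) (Gk \<tau>)"
    and band: "\<forall>a<m. \<forall>b<m. bandc n (c a b)"
    and op: "opmat_pos m (\<lambda>a b. Top (c a b))"
  shows "0 \<le> (\<Sum>a<m. \<Sum>b<m. \<Sum>i<p. \<Sum>j<p. cnj (v a i) * (\<Sum>d\<in>Dset n. c a b d * \<tau> i j d) * v b j)"
proof -
  define h where "h d = (\<Sum>a<m. \<Sum>b<m. \<Sum>i<p. \<Sum>j<p. cnj (v a i) * c a b d * \<tau> i j d * v b j)" for d
  have "(\<Sum>a<m. \<Sum>b<m. \<Sum>i<p. \<Sum>j<p. cnj (v a i) * (\<Sum>d\<in>Dset n. c a b d * \<tau> i j d) * v b j)
      = (\<Sum>a<m. \<Sum>b<m. \<Sum>i<p. \<Sum>j<p. \<Sum>d\<in>Dset n. cnj (v a i) * c a b d * \<tau> i j d * v b j)"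
    by (simp add: sum_distrib_left sum_distrib_right mult_ac)
  also have "\<dots> = (\<Sum>d\<in>Dset n. h d)"
    unfolding h_def by (simp only: sum.swap[where B = "Dset n"])
  finally have tgt: "(\<Sum>a<m. \<Sum>b<m. \<Sum>i<p. \<Sum>j<p. cnj (v a i) * (\<Sum>d\<in>Dset n. c a b d * \<tau> i j d) * v b j)
      = (\<Sum>d\<in>Dset n. h d)" .
  have cz: "c a b d = 0" if "d \<notin> Dset n" "a < m" "b < m" for a b d
    using band that unfolding bandc_def Dset_iff by auto
  have hz: "h d = 0" if "d \<notin> Dset n" for d
    unfolding h_def using cz[OF that] by simp
  show ?thesis
  proof (cases "n = 0")
    case True
    then have "Dset n = {}" unfolding Dset_def by simp
    then show ?thesis unfolding tgt by simp
  next
    case False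
    then have n1: "1 \<le> n" by simp
    define S where "S N = (\<Sum>k<N. \<Sum>l<N. h (int k - int l))" for N
    have Spos: "0 \<le> S N" if N: "n \<le> N" for N
    proof -
      obtain H where H: "psd ({..<N} \<times> {..<p}) H"
        "\<forall>x\<in>{..<N} \<times> {..<p}. \<forall>y\<in>{..<N} \<times> {..<p}. \<bar>int (fst x) - int (fst y)\<bar> < int n \<longrightarrow> H x y = Gk \<tau> x y"
        using band_complete[OF G n1 N] by blast
      define Z where "Z = {..<N} \<times> ({..<m} \<times> {..<p})"
      define f1 where "f1 z = (fst z, fst (snd z))" for z :: "nat \<times> nat \<times> nat"
      define f2 where "f2 z = (fst z, snd (snd z))" for z :: "nat \<times> nat \<times> nat"
      have fZ: "finite Z" unfolding Z_def by simp
      have M: "psd Z (\<lambda>z w. c (snd (f1 z)) (snd (f1 w)) (int (fst (f1 z)) - int (fst (f1 w))))"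
        by (rule psd_pullback[OF fZ _ _ opmat_to_psd[OF op, of N]]) (auto simp: Z_def f1_def)
      have H': "psd Z (\<lambda>z w. H (f2 z) (f2 w))"
        by (rule psd_pullback[OF fZ _ _ H(1)]) (auto simp: Z_def f2_def)
      define P where "P z w = c (snd (f1 z)) (snd (f1 w)) (int (fst (f1 z)) - int (fst (f1 w))) * H (f2 z) (f2 w)" for z w
      have pP: "psd Z P" unfolding P_def by (rule psd_schur_prod[OF fZ M H'])
      define u where "u z = v (fst (snd z)) (snd (snd z))" for z :: "nat \<times> nat \<times> nat"
      have Pval: "P (k, a, i) (l, b, j) = c a b (int k - int l) * \<tau> i j (int k - int l)"
        if "k < N" "l < N" "a < m" "b < m" "i < p" "j < p" for k a i l b j
      proof (cases "\<bar>int k - int l\<bar> < int n")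
        case True
        then have "H (k, i) (l, j) = Gk \<tau> (k, i) (l, j)" using H(2) that by auto
        then show ?thesis unfolding P_def f1_def f2_def Gk_def by simp
      next
        case False
        then have "int k - int l \<notin> Dset n" unfolding Dset_iff by simp
        then show ?thesis unfolding P_def f1_def f2_def using cz that by simp
      qed
      have "sesq Z P u u = (\<Sum>k<N. \<Sum>a<m. \<Sum>i<p. \<Sum>l<N. \<Sum>b<m. \<Sum>j<p.
                cnj (v a i) * (c a b (int k - int l) * \<tau> i j (int k - int l)) * v b j)"
        unfolding Z_def sesq_prod sum_prod_split u_def
        by (intro sum.cong refl) (simp add: Pval)
      also have "\<dots> = (\<Sum>k<N. \<Sum>a<m. \<Sum>l<N. \<Sum>i<p. \<Sum>b<m. \<Sum>j<p.
                cnj (v a i) * (c a b (int k - int l) * \<tau> i j (int k - int l)) * v b j)"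
        by (rule sum.cong[OF refl], rule sum.cong[OF refl], rule sum.swap)
      also have "\<dots> = (\<Sum>k<N. \<Sum>l<N. \<Sum>a<m. \<Sum>i<p. \<Sum>b<m. \<Sum>j<p.
                cnj (v a i) * (c a b (int k - int l) * \<tau> i j (int k - int l)) * v b j)"
        by (rule sum.cong[OF refl], rule sum.swap)
      also have "\<dots> = (\<Sum>k<N. \<Sum>l<N. \<Sum>a<m. \<Sum>b<m. \<Sum>i<p. \<Sum>j<p.
                cnj (v a i) * (c a b (int k - int l) * \<tau> i j (int k - int l)) * v b j)"
        by (rule sum.cong[OF refl], rule sum.cong[OF refl], rule sum.cong[OF refl], rule sum.swap)
      also have "\<dots> = S N" unfolding S_def h_def by (simp add: mult_ac)
      finally show ?thesis using pP unfolding psd_def by metis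
    qed
    have step: "S (Suc N) = S N + (\<Sum>d\<in>Dset n. h d)" if "n \<le> N" for N
      unfolding S_def by (rule S_step[OF hz that])
    have "S (n + t) = S n + of_nat t * (\<Sum>d\<in>Dset n. h d)" for t
    proof (induction t)
      case 0
      then show ?case by simp
    next
      case (Suc t)
      have "S (n + Suc t) = S (n + t) + (\<Sum>d\<in>Dset n. h d)" using step[of "n + t"] by simp
      then show ?case using Suc.IH by (simp add: algebra_simps)
    qed
    then have "0 \<le> S n + of_nat t * (\<Sum>d\<in>Dset n. h d)" for t
      using Spos[of "n + t"] by simp
    then have "0 \<le> (\<Sum>d\<in>Dset n. h d)" by (rule lin_nonneg)
    then show ?thesis unfolding tgt .
  qed
qed



definition Psi :: "nat \<Rightarrow> functional \<Rightarrow> cmat" where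
  "Psi n \<phi> = (\<lambda>k l. if k < n \<and> l < n then \<phi> (Top (dl (int k - int l))) else 0)"

lemma diff_in_Dset: "k < n \<Longrightarrow> l < n \<Longrightarrow> int k - int l \<in> Dset n"
  unfolding Dset_iff by auto

lemma Top_in_sys: "bandc n c \<Longrightarrow> Top c \<in> toeplitz_system n"
  unfolding system_eq by blast

lemma sys_Top:
  assumes "T \<in> toeplitz_system n"
  shows "bandc n (coef T) \<and> T = Top (coef T)"
proof -
  obtain c where c: "bandc n c" "T = Top c" using assms unfolding system_eq by blast
  have "coef T = c" unfolding c(2) by (rule ext, rule coef_Top)
  then show ?thesis using c by simp
qed

lemma Psi_range: "\<phi> \<in> dual_space n \<Longrightarrow> Psi n \<phi> \<in> toeplitz_mats n"
  unfolding toeplitz_mats_def Psi_def mem_Collect_eq by (rule exI[of _ "\<lambda>d. \<phi> (Top (dl d))"]) simp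

lemma Psi_val: "d \<in> Dset n \<Longrightarrow> Psi n \<phi> (nat d) (nat (- d)) = \<phi> (Top (dl d))"
  unfolding Psi_def Dset_iff by auto

lemma Psi_inj: "inj_on (Psi n) (dual_space n)"
proof (rule inj_onI)
  fix \<phi> \<psi> assume p: "\<phi> \<in> dual_space n" and q: "\<psi> \<in> dual_space n" and e: "Psi n \<phi> = Psi n \<psi>"
  show "\<phi> = \<psi>"
  proof
    fix T
    show "\<phi> T = \<psi> T"
    proof (cases "T \<in> toeplitz_system n")
      case True
      then have c: "bandc n (coef T)" "T = Top (coef T)" using sys_Top by blast+
      have "\<phi> (Top (dl d)) = \<psi> (Top (dl d))" if "d \<in> Dset n" for d
        using Psi_val[OF that, of \<phi>] Psi_val[OF that, of \<psi>] e by simp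
      then show ?thesis using dual_expand[OF p c(1)] dual_expand[OF q c(1)] c(2)
        by (metis (no_types, lifting) sum.cong)
    next
      case False
      then show ?thesis using p q unfolding dual_space_def by simp
    qed
  qed
qed

lemma Psi_surj:
  assumes "A \<in> toeplitz_mats n"
  shows "\<exists>\<phi>\<in>dual_space n. Psi n \<phi> = A"
proof -
  obtain \<tau> where \<tau>: "\<forall>k l. A k l = (if k < n \<and> l < n then \<tau> (int k - int l) else 0)"
    using assms unfolding toeplitz_mats_def by blast
  define \<phi> where "\<phi> T = (if T \<in> toeplitz_system n then (\<Sum>d\<in>Dset n. coef T d * \<tau> d) else 0)" for T
  have add: "op_add T S \<in> toeplitz_system n" if "T \<in> toeplitz_system n" "S \<in> toeplitz_system n" for T S
  proof -
    have t: "bandc n (coef T)" "T = Top (coef T)" using sys_Top[OF that(1)] by auto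
    have u: "bandc n (coef S)" "S = Top (coef S)" using sys_Top[OF that(2)] by auto
    have "op_add T S = op_add (Top (coef T)) (Top (coef S))" using t(2) u(2) by (rule arg_cong2[where f = op_add])
    also have "\<dots> = Top (\<lambda>k. coef T k + coef S k)" by (rule Top_add[OF t(1) u(1)])
    finally show ?thesis using Top_in_sys[OF bandc_add[OF t(1) u(1)]] by simp
  qed
  have scl: "op_scale a T \<in> toeplitz_system n" if "T \<in> toeplitz_system n" for a T
  proof -
    have t: "bandc n (coef T)" "T = Top (coef T)" using sys_Top[OF that(1)] by auto
    have "op_scale a T = op_scale a (Top (coef T))" using t(2) by (rule arg_cong)
    also have "\<dots> = Top (\<lambda>k. a * coef T k)" by (rule Top_scale[OF t(1)])
    finally show ?thesis using Top_in_sys[OF bandc_scale[OF t(1)]] by simp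
  qed
  have "\<phi> \<in> dual_space n"
    unfolding dual_space_def
  proof (intro CollectI conjI ballI allI impI)
    fix T S assume "T \<in> toeplitz_system n" "S \<in> toeplitz_system n"
    then show "\<phi> (op_add T S) = \<phi> T + \<phi> S"
      using add unfolding \<phi>_def by (simp add: coef_add sum.distrib algebra_simps)
  next
    fix a T assume "T \<in> toeplitz_system n"
    then show "\<phi> (op_scale a T) = a * \<phi> T"
      using scl unfolding \<phi>_def by (simp add: coef_scale sum_distrib_left algebra_simps)
  next
    fix T assume "T \<notin> toeplitz_system n"
    then show "\<phi> T = 0" unfolding \<phi>_def by simp
  qed
  moreover have "Psi n \<phi> = A"
  proof (intro ext)
    fix k l
    show "Psi n \<phi> k l = A k l"
    proof (cases "k < n \<and> l < n")
      case True
      then have D: "int k - int l \<in> Dset n" using diff_in_Dset by blast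
      have "\<phi> (Top (dl (int k - int l))) = (\<Sum>d\<in>Dset n. dl (int k - int l) d * \<tau> d)"
        unfolding \<phi>_def using Top_in_sys[OF bandc_dl[OF D]] by (simp add: coef_Top)
      also have "\<dots> = (\<Sum>d\<in>Dset n. if d = int k - int l then \<tau> d else 0)"
        by (intro sum.cong refl) (simp add: dl_def)
      also have "\<dots> = \<tau> (int k - int l)" using D by simp
      finally show ?thesis using True \<tau> unfolding Psi_def by simp
    next
      case False
      then show ?thesis using \<tau> unfolding Psi_def by auto
    qed
  qed
  ultimately show ?thesis by blast
qed

lemma blk:
  assumes "\<And>i j k l. i < p \<Longrightarrow> j < p \<Longrightarrow> k < n \<Longrightarrow> l < n \<Longrightarrow> B i j k l = \<tau> i j (int k - int l)"
  shows "sesq ({..<n} \<times> {..<p}) (Gk \<tau>) u u = (\<Sum>i<p. \<Sum>j<p. \<Sum>k<n. \<Sum>l<n. cnj (u (k,i)) * B i j k l * u (l,j))"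
proof -
  have "sesq ({..<n} \<times> {..<p}) (Gk \<tau>) u u = (\<Sum>k<n. \<Sum>i<p. \<Sum>l<n. \<Sum>j<p. cnj (u (k,i)) * B i j k l * u (l,j))"
    unfolding sesq_prod Gk_def using assms by (intro sum.cong refl) simp
  also have "\<dots> = (\<Sum>i<p. \<Sum>k<n. \<Sum>l<n. \<Sum>j<p. cnj (u (k,i)) * B i j k l * u (l,j))"
    by (rule sum.swap)
  also have "\<dots> = (\<Sum>i<p. \<Sum>k<n. \<Sum>j<p. \<Sum>l<n. cnj (u (k,i)) * B i j k l * u (l,j))"
    by (rule sum.cong[OF refl], rule sum.cong[OF refl], rule sum.swap)
  also have "\<dots> = (\<Sum>i<p. \<Sum>j<p. \<Sum>k<n. \<Sum>l<n. cnj (u (k,i)) * B i j k l * u (l,j))"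
    by (rule sum.cong[OF refl], rule sum.swap)
  finally show ?thesis .
qed

lemma blockmat_iff_psd:
  assumes "\<And>i j k l. i < p \<Longrightarrow> j < p \<Longrightarrow> k < n \<Longrightarrow> l < n \<Longrightarrow> B i j k l = \<tau> i j (int k - int l)"
  shows "blockmat_pos p n B \<longleftrightarrow> psd ({..<n} \<times> {..<p}) (Gk \<tau>)"
proof
  assume b: "blockmat_pos p n B"
  show "psd ({..<n} \<times> {..<p}) (Gk \<tau>)"
    unfolding psd_def
  proof
    fix u
    have e: "sesq ({..<n} \<times> {..<p}) (Gk \<tau>) u u = (\<Sum>i<p. \<Sum>j<p. \<Sum>k<n. \<Sum>l<n. cnj (u (k,i)) * B i j k l * u (l,j))"
      by (rule blk[where p=p and n=n and B=B and \<tau>=\<tau>, OF assms])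
    have "cnonneg (\<Sum>i<p. \<Sum>j<p. \<Sum>k<n. \<Sum>l<n. cnj (u (k,i)) * B i j k l * u (l,j))"
      using b unfolding blockmat_pos_def by (rule allE[where x = "\<lambda>i k. u (k,i)"]) simp
    then show "0 \<le> sesq ({..<n} \<times> {..<p}) (Gk \<tau>) u u" unfolding e cnonneg_iff .
  qed
next
  assume ps: "psd ({..<n} \<times> {..<p}) (Gk \<tau>)"
  show "blockmat_pos p n B"
    unfolding blockmat_pos_def
  proof
    fix v :: "nat \<Rightarrow> nat \<Rightarrow> complex"
    have "0 \<le> sesq ({..<n} \<times> {..<p}) (Gk \<tau>) (\<lambda>x. v (snd x) (fst x)) (\<lambda>x. v (snd x) (fst x))"
      using ps unfolding psd_def by blast
    moreover have "sesq ({..<n} \<times> {..<p}) (Gk \<tau>) (\<lambda>x. v (snd x) (fst x)) (\<lambda>x. v (snd x) (fst x))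
       = (\<Sum>i<p. \<Sum>j<p. \<Sum>k<n. \<Sum>l<n. cnj (v i k) * B i j k l * v j l)"
      using blk[where p=p and n=n and B=B and \<tau>=\<tau> and u="\<lambda>x. v (snd x) (fst x)", OF assms] by simp
    ultimately show "cnonneg (\<Sum>a<p. \<Sum>b<p. \<Sum>i<n. \<Sum>j<n. cnj (v a i) * B a b i j * v b j)"
      unfolding cnonneg_iff by simp
  qed
qed

lemma opmat_cong:
  assumes "\<And>a b. a < m \<Longrightarrow> b < m \<Longrightarrow> R a b = R' a b"
  shows "opmat_pos m R \<longleftrightarrow> opmat_pos m R'"
proof -
  have "(\<Sum>a<m. \<Sum>b<m. l2_inner (R a b (x b)) (x a)) = (\<Sum>a<m. \<Sum>b<m. l2_inner (R' a b (x b)) (x a))" for x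
    using assms by (intro sum.cong refl) auto
  then show ?thesis unfolding opmat_pos_def by simp
qed

lemma pos_equiv:
  assumes dual: "\<forall>i<p. \<forall>j<p. \<Phi> i j \<in> dual_space n"
  shows "dual_mat_pos n p \<Phi> \<longleftrightarrow> blockmat_pos p n (\<lambda>i j. Psi n (\<Phi> i j))"
proof -
  define \<tau> where "\<tau> i j d = \<Phi> i j (Top (dl d))" for i j d
  have B: "blockmat_pos p n (\<lambda>i j. Psi n (\<Phi> i j)) \<longleftrightarrow> psd ({..<n} \<times> {..<p}) (Gk \<tau>)"
    by (rule blockmat_iff_psd) (simp add: Psi_def \<tau>_def)
  show ?thesis
  proof
    assume dm: "dual_mat_pos n p \<Phi>"
    have sys: "\<forall>a<n. \<forall>b<n. Top (dl (int a - int b)) \<in> toeplitz_system n"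
      using Top_in_sys bandc_dl diff_in_Dset by blast
    have bp: "blockmat_pos n p (\<lambda>a b i j. \<Phi> i j (Top (dl (int a - int b))))"
      using dm[unfolded dual_mat_pos_def, rule_format, of n "\<lambda>a b. Top (dl (int a - int b))"]
        sys opmat_shift_pos[of n] by simp
    have "psd ({..<n} \<times> {..<p}) (Gk \<tau>)"
      unfolding psd_def
    proof
      fix u :: "nat \<times> nat \<Rightarrow> complex"
      have "cnonneg (\<Sum>a<n. \<Sum>b<n. \<Sum>i<p. \<Sum>j<p. cnj (u (a,i)) * \<Phi> i j (Top (dl (int a - int b))) * u (b,j))"
        using bp unfolding blockmat_pos_def by (rule allE[where x = "\<lambda>a i. u (a,i)"])
      moreover have "sesq ({..<n} \<times> {..<p}) (Gk \<tau>) u u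
          = (\<Sum>a<n. \<Sum>b<n. \<Sum>i<p. \<Sum>j<p. cnj (u (a,i)) * \<Phi> i j (Top (dl (int a - int b))) * u (b,j))"
        unfolding sesq_prod Gk_def \<tau>_def fst_conv snd_conv by (rule sum.cong[OF refl], rule sum.swap)
      ultimately show "0 \<le> sesq ({..<n} \<times> {..<p}) (Gk \<tau>) u u" unfolding cnonneg_iff by simp
    qed
    then show "blockmat_pos p n (\<lambda>i j. Psi n (\<Phi> i j))" using B by simp
  next
    assume "blockmat_pos p n (\<lambda>i j. Psi n (\<Phi> i j))"
    then have G: "psd ({..<n} \<times> {..<p}) (Gk \<tau>)" using B by simp
    show "dual_mat_pos n p \<Phi>"
      unfolding dual_mat_pos_def
    proof (intro allI impI)
      fix m and R :: "nat \<Rightarrow> nat \<Rightarrow> hop"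
      assume "(\<forall>a<m. \<forall>b<m. R a b \<in> toeplitz_system n) \<and> opmat_pos m R"
      then have Rs: "\<forall>a<m. \<forall>b<m. R a b \<in> toeplitz_system n" and op: "opmat_pos m R" by auto
      define c where "c a b = coef (R a b)" for a b
      have cb: "bandc n (c a b)" and Rc: "R a b = Top (c a b)" if "a < m" "b < m" for a b
        using sys_Top[of "R a b" n] Rs that unfolding c_def by auto
      have op': "opmat_pos m (\<lambda>a b. Top (c a b))" using op Rc by (subst opmat_cong[where R' = R]) auto
      have ev: "\<Phi> i j (R a b) = (\<Sum>d\<in>Dset n. c a b d * \<tau> i j d)" if "a < m" "b < m" "i < p" "j < p" for a b i j
        unfolding Rc[OF that(1,2)] \<tau>_def using dual_expand[OF _ cb[OF that(1,2)], of "\<Phi> i j"] dual that(3,4) by simp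
      show "blockmat_pos m p (\<lambda>a b i j. \<Phi> i j (R a b))"
        unfolding blockmat_pos_def
      proof
        fix v :: "nat \<Rightarrow> nat \<Rightarrow> complex"
        have "0 \<le> (\<Sum>a<m. \<Sum>b<m. \<Sum>i<p. \<Sum>j<p. cnj (v a i) * (\<Sum>d\<in>Dset n. c a b d * \<tau> i j d) * v b j)"
          by (rule core[OF G _ op']) (use cb in auto)
        also have "\<dots> = (\<Sum>a<m. \<Sum>b<m. \<Sum>i<p. \<Sum>j<p. cnj (v a i) * \<Phi> i j (R a b) * v b j)"
          using ev by (intro sum.cong refl) simp
        finally show "cnonneg (\<Sum>a<m. \<Sum>b<m. \<Sum>i<p. \<Sum>j<p. cnj (v a i) * \<Phi> i j (R a b) * v b j)"
          unfolding cnonneg_iff .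
      qed
    qed
  qed
qed

theorem corollary4p2:
  fixes n :: nat
  shows "\<exists>\<Psi>. ucoi n \<Psi>"
proof (intro exI[of _ "Psi n"])
  have bij: "bij_betw (Psi n) (dual_space n) (toeplitz_mats n)"
    unfolding bij_betw_def using Psi_inj Psi_range Psi_surj by blast
  have unit: "Psi n \<phi> = id_mat n"
    if "\<phi> \<in> dual_space n" and h: "\<forall>f\<in>trig_space n. \<phi> (toeplitz_op f) = fourier_coeff f 0" for \<phi>
  proof (intro ext)
    fix k l
    show "Psi n \<phi> k l = id_mat n k l"
    proof (cases "k < n \<and> l < n")
      case True
      define e where "e = int k - int l"
      have D: "e \<in> Dset n" unfolding e_def using True diff_in_Dset by blast
      have T: "Top (dl e) = toeplitz_op (tp n (dl e))"
        using tp_fourier[OF bandc_dl[OF D]] toeplitz_op_Top by simp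
      have "\<phi> (Top (dl e)) = fourier_coeff (tp n (dl e)) 0"
        unfolding T using h tp_trig[OF bandc_dl[OF D]] by blast
      also have "\<dots> = dl e 0" using tp_fourier[OF bandc_dl[OF D]] by simp
      finally show ?thesis using True unfolding Psi_def id_mat_def e_def dl_def by auto
    next
      case False
      then show ?thesis unfolding Psi_def id_mat_def by auto
    qed
  qed
  show "ucoi n (Psi n)"
    unfolding ucoi_def
  proof (intro conjI ballI allI impI)
    show "bij_betw (Psi n) (dual_space n) (toeplitz_mats n)" by (rule bij)
  next
    fix \<phi> \<psi> assume "\<phi> \<in> dual_space n" "\<psi> \<in> dual_space n"
    show "Psi n (\<lambda>T. \<phi> T + \<psi> T) = (\<lambda>k l. Psi n \<phi> k l + Psi n \<psi> k l)"
      unfolding Psi_def by (intro ext) simp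
  next
    fix c \<phi> assume "\<phi> \<in> dual_space n"
    show "Psi n (\<lambda>T. c * \<phi> T) = (\<lambda>k l. c * Psi n \<phi> k l)"
      unfolding Psi_def by (intro ext) simp
  next
    fix \<phi> assume "\<phi> \<in> dual_space n" "\<forall>f\<in>trig_space n. \<phi> (toeplitz_op f) = fourier_coeff f 0"
    then show "Psi n \<phi> = id_mat n" by (rule unit)
  next
    fix p :: nat and \<Phi> assume "\<forall>i<p. \<forall>j<p. \<Phi> i j \<in> dual_space n"
    then show "dual_mat_pos n p \<Phi> \<longleftrightarrow> blockmat_pos p n (\<lambda>i j. Psi n (\<Phi> i j))"
      by (rule pos_equiv)
  qed
qed


end
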